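(* Let $D$ be a set, let $m \ge 1$, $e \ge k \ge 1$ be integers, and let $\Sigma = \mathbb{Z}_{2^{32}}^{2m}$. Let $J : D \to \Sigma^{e}$ be a map (an erasure code) with minimum distance $k$, i.e. for all $x \neq y$ in $D$, the sequences $J(x)$ and $J(y)$ differ in at least $k$ of their $e$ coordinates. For a key $s \in \mathbb{Z}_{2^{32}}^{2m}$ and $d \in \Sigma$ define $$\mathrm{NH}(s,d) = \sum_{i=0}^{m-1} (d_{2i} + s_{2i})(d_{2i+1} + s_{2i+1}) \in \mathbb{Z}_{2^{64}},$$ where each addition $d_j + s_j$ is computed in $\mathbb{Z}_{2^{32}}$ and the result is regarded as an integer in $[0,2^{32})$, while the products and the outer sum are computed in $\mathbb{Z}_{2^{64}}$. Let $T$ be a $k \times e$ matrix with integer entries, acting on $\mathbb{Z}_{2^{64}}^{e}$ by matrix multiplication over $\mathbb{Z}_{2^{64}}$. Assume that for every set $F$ of $k$ distinct column indices, the $k\times k$ submatrix $T|_F$ consisting of the columns of $T$ indexed by $F$ has integer determinant not divisible by $2^{64}$, and let $p$ be the largest integer such that $2^{p}$ divides $\det(T|_F)$ for some such $F$ (i.e. $p = \max_F \nu_2(\det T|_F)$). For keys $s = (s_1,\dots,s_e)$ with each $s_i \in \mathbb{Z}_{2^{32}}^{2m}$, define the EHC hash $$E(s,x) = T \cdot \big(\mathrm{NH}(s_1, J(x)_1), \dots, \mathrm{NH}(s_e, J(x)_e)\big)^{\top} \in \mathbb{Z}_{2^{64}}^{k}.$$ Then for all $x \neq y$ in $D$ and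 all $\delta \in \mathbb{Z}_{2^{64}}^{k}$, $$\Pr_s\big[E(s,x) - E(s,y) = \delta\big] \le 2^{k(p-32)},$$ where $s_1,\dots,s_e$ are chosen independently and uniformly at random from $\mathbb{Z}_{2^{32}}^{2m}$. That is, $E$ is $2^{k(p-32)}$-almost $\Delta$-universal.
   Context: A hash family $H$ (a map from seeds $S$ and domain $D$ to a codomain that is an abelian group) is $\varepsilon$-almost $\Delta$-universal if for all $x \neq y$ in $D$ and every $\delta$ in the codomain, $\Pr_{s \in S}[H(s,x) - H(s,y) = \delta] \le \varepsilon$, with $s$ uniform. $\nu_2(n)$ denotes the exponent of the largest power of $2$ dividing the nonzero integer $n$. This is the "generalized Encode, Hash, Combine" construction: encode with an erasure code of minimum distance $k$, hash each encoded coordinate with NH under independent keys, and combine with a fixed integer matrix over $\mathbb{Z}_{2^{64}}$. *)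

theory Defs
  imports "Jordan_Normal_Form.Determinant" "Jordan_Normal_Form.DL_Submatrix"
    "HOL-Library.FuncSet" "HOL-Computational_Algebra.Factorial_Ring"
begin

text \<open>Elements of Z_{2^32} and Z_{2^64} are represented by their canonical
 integer representatives in {0..<2^32} resp. {0..<2^64}.\<close>

definition words :: "nat \<Rightarrow> (nat \<Rightarrow> int) set" where
  "words m = {0..<2*m} \<rightarrow>\<^sub>E {0..<(2::int)^32}"

definition NH :: "nat \<Rightarrow> (nat \<Rightarrow> int) \<Rightarrow> (nat \<Rightarrow> int) \<Rightarrow> int" where
  "NH m s d = (\<Sum>i<m. ((d (2*i) + s (2*i)) mod 2^32) * ((d (2*i+1) + s (2*i+1)) mod 2^32))
              mod 2^64"

definition EHC :: "nat \<Rightarrow> int mat \<Rightarrow> ('d \<Rightarrow> nat \<Rightarrow> nat \<Rightarrow> int) \<Rightarrow> (nat \<Rightarrow> nat \<Rightarrow> int)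
                   \<Rightarrow> 'd \<Rightarrow> nat \<Rightarrow> int" where
  "EHC m T J s x i = (\<Sum>j<dim_col T. T $$ (i,j) * NH m (s j) (J x j)) mod 2^64"

definition keys :: "nat \<Rightarrow> nat \<Rightarrow> (nat \<Rightarrow> nat \<Rightarrow> int) set" where
  "keys m e = {0..<e} \<rightarrow>\<^sub>E words m"

end

theory Submission
  imports Defs
begin

lemma core_arith:
  fixes A A' u u' W :: int
  assumes A: "0 \<le> A" "A < W" and A': "0 \<le> A'" "A' < W" and AA: "A \<noteq> A'"
    and u: "\<bar>u\<bar> < W" and u': "\<bar>u'\<bar> < W" and d1: "W dvd u' - u"
    and d2: "W*W dvd A*u - A'*u'"
  shows "u = 0"
proof -
  have W0: "W > 0" using A by simp
  obtain q where q: "u' - u = W*q" using d1 by (auto elim: dvdE)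
  have "\<bar>W*q\<bar> < W*2" using u u' q by linarith
  hence "\<bar>q\<bar> < 2" using W0 by (simp add: abs_mult)
  hence "q = 0 \<or> q = 1 \<or> q = -1" by linarith
  moreover
  { assume "q = 0"
    hence uu: "u' = u" using q by simp
    have "u = 0"
    proof (rule ccontr)
      assume "u \<noteq> 0"
      have "\<bar>(A - A')*u\<bar> = \<bar>A - A'\<bar> * \<bar>u\<bar>" by (simp add: abs_mult)
      also have "\<dots> < W * W" using A A' u by (intro mult_strict_mono) auto
      finally have lt: "\<bar>(A - A')*u\<bar> < W*W" .
      have nz: "(A - A')*u \<noteq> 0" using AA \<open>u \<noteq> 0\<close> by simp
      have "W*W dvd (A - A')*u" using d2 uu by (simp add: algebra_simps)
      hence "\<bar>W*W\<bar> \<le> \<bar>(A - A')*u\<bar>" using nz dvd_imp_le_int by blast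
      thus False using lt W0 by simp
    qed }
  moreover
  { fix a b c :: int
    assume c: "0 < c" "c < W" and a: "0 \<le> a" "a < W" and b: "0 \<le> b" "b < W"
      and dv: "W*W dvd a*c + b*(W - c)"
    have "a*c \<le> (W-1)*c" using a c by (intro mult_right_mono) auto
    moreover have "b*(W-c) \<le> (W-1)*(W-c)" using b c by (intro mult_right_mono) auto
    moreover have "(W-1)*c + (W-1)*(W-c) = W*W - W" by (simp add: algebra_simps)
    ultimately have le: "a*c + b*(W - c) < W*W" using W0 by linarith
    have ge1: "a*c \<ge> 0" "b*(W-c) \<ge> 0" using a b c by auto
    have "a*c + b*(W - c) = 0"
    proof (rule ccontr)
      assume "a*c + b*(W - c) \<noteq> 0"
      hence "\<bar>W*W\<bar> \<le> \<bar>a*c + b*(W - c)\<bar>" using dv dvd_imp_le_int by blast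
      thus False using le ge1 by simp
    qed
    hence "a*c = 0" "b*(W-c) = 0" using ge1 by linarith+
    hence "a = 0 \<and> b = 0" using c by simp
  } note key = this
  moreover
  { assume "q = -1"
    hence uu: "u' = u - W" using q by simp
    hence "0 < u" using u' by simp
    have "A*u - A'*u' = A*u + A'*(W - u)" unfolding uu by (simp add: algebra_simps)
    hence "W*W dvd A*u + A'*(W - u)" using d2 by metis
    hence "A = 0 \<and> A' = 0" using key[of u A A'] \<open>0 < u\<close> u A A' by simp
    hence False using AA by simp }
  moreover
  { assume "q = 1"
    hence uu: "u' = u + W" using q by simp
    hence "u < 0" using u' by simp
    have "A*u - A'*u' = - (A*(-u) + A'*(W - (-u)))" unfolding uu by (simp add: algebra_simps)
    moreover have "W*W dvd - (A*(-u) + A'*(W - (-u)))" using d2 calculation by simp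
    hence "W*W dvd (A*(-u) + A'*(W - (-u)))" by (simp only: dvd_minus_iff)
    hence "A = 0 \<and> A' = 0" using key[of "-u" A A'] \<open>u < 0\<close> u A A' by simp
    hence False using AA by simp }
  ultimately show ?thesis by blast
qed

lemma dvd_mod_self: "(N::int) dvd x mod N - x"
  by (metis mod_mod_trivial mod_eq_dvd_iff)

lemma dvd_range_eq:
  fixes x x' W :: int
  assumes "0 \<le> x" "x < W" "0 \<le> x'" "x' < W" "W dvd x - x'"
  shows "x = x'"
proof -
  have "x mod W = x' mod W" using assms(5) by (simp add: mod_eq_dvd_iff)
  thus ?thesis using assms by simp
qed

lemma pair_inj:
  fixes a a' b b' t y y' W :: int
  assumes W: "W > 0" and a: "0 \<le> a" "a < W" and a': "0 \<le> a'" "a' < W" and aa: "a \<noteq> a'"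
    and y: "0 \<le> y" "y < W" and y': "0 \<le> y'" "y' < W"
    and dv: "W*W dvd ((a+t) mod W * ((b+y) mod W) - (a'+t) mod W * ((b'+y) mod W))
                    - ((a+t) mod W * ((b+y') mod W) - (a'+t) mod W * ((b'+y') mod W))"
  shows "y = y'"
proof -
  define A where "A = (a+t) mod W"
  define A' where "A' = (a'+t) mod W"
  define Y where "Y = (b+y) mod W"
  define Z where "Z = (b+y') mod W"
  define Y' where "Y' = (b'+y) mod W"
  define Z' where "Z' = (b'+y') mod W"
  have AA: "A \<noteq> A'"
  proof
    assume "A = A'"
    hence "W dvd (a+t) - (a'+t)" unfolding A_def A'_def by (simp add: mod_eq_dvd_iff)
    hence "W dvd a - a'" by simp
    thus False using dvd_range_eq[OF a a'] aa by blast
  qed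
  have rA: "0 \<le> A" "A < W" "0 \<le> A'" "A' < W" unfolding A_def A'_def using W by auto
  have rY: "0 \<le> Y" "Y < W" "0 \<le> Z" "Z < W" "0 \<le> Y'" "Y' < W" "0 \<le> Z'" "Z' < W"
    unfolding Y_def Z_def Y'_def Z'_def using W by auto
  have d1: "W dvd (Y' - Z') - (Y - Z)"
  proof -
    have "(Y' - Z') - (Y - Z) = (Y' - (b'+y)) - (Z' - (b'+y')) - (Y - (b+y)) + (Z - (b+y'))"
      by (simp add: algebra_simps)
    moreover have "W dvd (Y' - (b'+y))" "W dvd (Z' - (b'+y'))" "W dvd (Y - (b+y))" "W dvd (Z - (b+y'))"
      unfolding Y_def Z_def Y'_def Z'_def by (rule dvd_mod_self)+
    ultimately show ?thesis by (metis dvd_add dvd_diff)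
  qed
  have "A*(Y - Z) - A'*(Y' - Z') = (A*Y - A'*Y') - (A*Z - A'*Z')" by (simp add: algebra_simps)
  hence d2: "W*W dvd A*(Y - Z) - A'*(Y' - Z')" using dv unfolding A_def A'_def Y_def Z_def Y'_def Z'_def
    by metis
  have "Y - Z = 0"
    by (rule core_arith[OF rA(1,2) rA(3,4) AA _ _ d1 d2]) (use rY in auto)
  hence "W dvd (b+y) - (b+y')" unfolding Y_def Z_def by (simp add: mod_eq_dvd_iff)
  hence "W dvd y - y'" by simp
  thus ?thesis using dvd_range_eq[OF y y'] by blast
qed

definition pterm :: "(nat \<Rightarrow> int) \<Rightarrow> (nat \<Rightarrow> int) \<Rightarrow> nat \<Rightarrow> int" where
  "pterm s d i = ((d (2*i) + s (2*i)) mod 2^32) * ((d (2*i+1) + s (2*i+1)) mod 2^32)"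

definition partner :: "nat \<Rightarrow> nat" where
  "partner i = (if even i then Suc i else i - 1)"

lemma NH_alt: "NH m s d = (\<Sum>i<m. pterm s d i) mod 2^64"
  by (simp add: NH_def pterm_def)

lemma dvd_mod4:
  fixes N x x' z z' :: int
  assumes "N dvd (x mod N - x' mod N) - (z mod N - z' mod N)"
  shows "N dvd (x - x') - (z - z')"
proof -
  have "(x - x') - (z - z') = ((x mod N - x' mod N) - (z mod N - z' mod N))
     - (x mod N - x) + (x' mod N - x') + (z mod N - z) - (z' mod N - z')"
    by (simp add: algebra_simps)
  thus ?thesis using assms dvd_mod_self[of N x] dvd_mod_self[of N x'] dvd_mod_self[of N z]
      dvd_mod_self[of N z'] by (metis dvd_add dvd_diff)
qed

lemma words_range: "d \<in> words m \<Longrightarrow> i < 2*m \<Longrightarrow> 0 \<le> d i \<and> d i < 2^32"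
  unfolding words_def by (auto simp: PiE_iff)

lemma partner_lt: "i < 2*m \<Longrightarrow> partner i < 2*m"
  unfolding partner_def by auto

lemma NH_inj:
  assumes d: "d \<in> words m" and d': "d' \<in> words m" and i0: "i0 < 2*m" and dd: "d i0 \<noteq> d' i0"
    and y: "0 \<le> y" "y < 2^32" and y': "0 \<le> y'" "y' < 2^32"
    and dv: "(2::int)^64 dvd (NH m (\<sigma>(partner i0 := y)) d - NH m (\<sigma>(partner i0 := y)) d')
                  - (NH m (\<sigma>(partner i0 := y')) d - NH m (\<sigma>(partner i0 := y')) d')"
  shows "y = y'"
proof -
  define i1 where "i1 = partner i0"
  define s where "s = \<sigma>(i1 := y)"
  define s' where "s' = \<sigma>(i1 := y')"
  define c where "c = i0 div 2"
  define f where "f i = (pterm s d i - pterm s d' i) - (pterm s' d i - pterm s' d' i)" for i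
  have c: "c < m" using i0 unfolding c_def by simp
  have dvs: "(2::int)^64 dvd ((\<Sum>i<m. pterm s d i) - (\<Sum>i<m. pterm s d' i))
          - ((\<Sum>i<m. pterm s' d i) - (\<Sum>i<m. pterm s' d' i))"
    by (rule dvd_mod4) (use dv in \<open>unfold NH_alt s_def s'_def i1_def\<close>)
  have eqs: "(\<Sum>i<m. f i) = ((\<Sum>i<m. pterm s d i) - (\<Sum>i<m. pterm s d' i))
          - ((\<Sum>i<m. pterm s' d i) - (\<Sum>i<m. pterm s' d' i))"
    unfolding f_def by (simp only: sum_subtractf)
  have dvsum: "(2::int)^64 dvd (\<Sum>i<m. f i)" unfolding eqs by (rule dvs)
  have sumc: "(\<Sum>i<m. f i) = f c"
  proof -
    have "(\<Sum>i<m. f i) = f c + (\<Sum>i\<in>{..<m} - {c}. f i)" using c by (simp add: sum.remove)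
    moreover have "f i = 0" if "i \<in> {..<m} - {c}" for i
    proof -
      have "i1 div 2 = c" unfolding i1_def c_def partner_def by (auto elim!: oddE)
      hence "2*i \<noteq> i1" "2*i+1 \<noteq> i1" using that by auto
      thus ?thesis unfolding f_def pterm_def s_def s'_def by simp
    qed
    ultimately show ?thesis by simp
  qed
  have W64: "(2::int)^64 = 2^32 * 2^32" by simp
  have dvc: "(2::int)^32 * 2^32 dvd f c" using dvsum unfolding sumc W64 .
  have r: "0 \<le> d i0" "d i0 < 2^32" "0 \<le> d' i0" "d' i0 < 2^32" using words_range[OF d i0] words_range[OF d' i0] by auto
  have W0: "(2::int)^32 > 0" by simp
  have p: "pterm ss dd c = (dd i0 + \<sigma> i0) mod 2^32 * ((dd i1 + yy) mod 2^32)"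
    if "ss i1 = yy" "ss i0 = \<sigma> i0" for ss dd yy
  proof (cases "even i0")
    case True
    hence q1: "2*c = i0" and q3: "i0 + 1 = i1" unfolding c_def i1_def partner_def by auto
    show ?thesis unfolding pterm_def q1 q3 that(1) that(2) ..
  next
    case False
    hence q1: "2*c = i1" and q3: "i1 + 1 = i0" unfolding c_def i1_def partner_def by (auto elim!: oddE)
    have "pterm ss dd c = ((dd i1 + ss i1) mod 2^32) * ((dd i0 + ss i0) mod 2^32)"
      by (simp only: pterm_def q1 q3)
    also have "\<dots> = (dd i0 + \<sigma> i0) mod 2^32 * ((dd i1 + yy) mod 2^32)"
      unfolding that(1) that(2) by (rule mult.commute)
    finally show ?thesis .
  qed
  have ne: "i1 \<noteq> i0" unfolding i1_def partner_def by (auto elim!: oddE)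
  have "s i1 = y" "s' i1 = y'" "s i0 = \<sigma> i0" "s' i0 = \<sigma> i0"
    unfolding s_def s'_def using ne by auto
  hence fc: "f c = ((d i0 + \<sigma> i0) mod 2^32 * ((d i1 + y) mod 2^32) - (d' i0 + \<sigma> i0) mod 2^32 * ((d' i1 + y) mod 2^32))
           - ((d i0 + \<sigma> i0) mod 2^32 * ((d i1 + y') mod 2^32) - (d' i0 + \<sigma> i0) mod 2^32 * ((d' i1 + y') mod 2^32))"
    unfolding f_def using p by metis
  show ?thesis by (rule pair_inj[OF W0 r(1,2) r(3,4) dd y y']) (use dvc in \<open>unfold fc\<close>)
qed

lemma count_Y:
  fixes h :: "int \<Rightarrow> int" and dt a oo :: int and v n :: nat
  assumes inj: "\<And>y y'. y \<in> Y0 \<Longrightarrow> y' \<in> Y0 \<Longrightarrow> (2::int)^n dvd h y - h y' \<Longrightarrow> y = y'"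
    and dt: "dt = 2^v * oo" "odd oo" "v \<le> n"
  shows "card {y \<in> Y0. (2::int)^n dvd dt * h y - a} \<le> 2^v"
proof (cases "{y \<in> Y0. (2::int)^n dvd dt * h y - a} = {}")
  case True
  show ?thesis unfolding True by simp
next
  case False
  define Y where "Y = {y \<in> Y0. (2::int)^n dvd dt * h y - a}"
  obtain y0 where y0: "y0 \<in> Y" using False Y_def by auto
  have pw: "(2::int)^n = 2^v * 2^(n-v)" using dt(3) by (simp add: power_add[symmetric])
  have cop: "coprime ((2::int)^(n-v)) oo" using dt(2) by simp
  have dv: "(2::int)^(n-v) dvd h y - h y0" if "y \<in> Y" for y
  proof -
    have a1: "(2::int)^n dvd dt * h y - a" "(2::int)^n dvd dt * h y0 - a" using that y0 unfolding Y_def by auto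
    have "(2::int)^n dvd (dt * h y - a) - (dt * h y0 - a)" using a1 by (rule dvd_diff)
    hence "(2::int)^v * 2^(n-v) dvd 2^v * (oo * (h y - h y0))" using pw dt(1) by (simp add: algebra_simps)
    hence "(2::int)^(n-v) dvd oo * (h y - h y0)" by simp
    thus ?thesis using cop by (simp add: coprime_dvd_mult_right_iff)
  qed
  define r where "r y = (h y - h y0) mod 2^n" for y
  define \<psi> where "\<psi> y = nat (r y div 2^(n-v))" for y
  have rdv: "r y = 2^(n-v) * (r y div 2^(n-v))" if "y \<in> Y" for y
  proof -
    have "(2::int)^(n-v) dvd r y" unfolding r_def using dv[OF that] pw
      by (metis dvd_mod dvd_triv_right)
    thus ?thesis by simp
  qed
  have r0: "0 \<le> r y" "r y < 2^n" for y unfolding r_def by auto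
  have "inj_on \<psi> Y"
  proof
    fix y y' assume yy: "y \<in> Y" "y' \<in> Y" "\<psi> y = \<psi> y'"
    have nn: "0 \<le> r y div 2^(n-v)" "0 \<le> r y' div 2^(n-v)" using r0 by (simp_all add: pos_imp_zdiv_nonneg_iff)
    have "r y div 2^(n-v) = r y' div 2^(n-v)" using yy(3) nn unfolding \<psi>_def
      using eq_nat_nat_iff by blast
    hence "r y = r y'" using rdv[OF yy(1)] rdv[OF yy(2)] by simp
    hence "(2::int)^n dvd (h y - h y0) - (h y' - h y0)" unfolding r_def by (simp add: mod_eq_dvd_iff)
    hence "(2::int)^n dvd h y - h y'" by simp
    thus "y = y'" using inj yy unfolding Y_def by auto
  qed
  moreover have "\<psi> ` Y \<subseteq> {..<2^v}"
  proof
    fix z assume "z \<in> \<psi> ` Y"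
    then obtain y where y: "y \<in> Y" "z = \<psi> y" by auto
    have "r y div 2^(n-v) < 2^v"
    proof -
      have "2^(n-v) * (r y div 2^(n-v)) < 2^(n-v) * 2^v" using rdv[OF y(1)] r0[of y] pw by (simp add: mult.commute)
      thus ?thesis by simp
    qed
    hence "nat (r y div 2^(n-v)) < 2^v" by (simp add: nat_less_iff)
    thus "z \<in> {..<2^v}" using y unfolding \<psi>_def by simp
  qed
  ultimately have "card Y \<le> card {..<(2::nat)^v}" by (intro card_inj_on_le) auto
  thus ?thesis unfolding Y_def by simp
qed

lemma fiber_card:
  assumes "finite S" "g ` S \<subseteq> T" "finite T" "\<And>t. t \<in> T \<Longrightarrow> card {s\<in>S. g s = t} \<le> N"
  shows "card S \<le> card T * N"
proof -
  have eq: "S = (\<Union>t\<in>T. {s\<in>S. g s = t})" using assms(2) by auto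
  have "card (\<Union>t\<in>T. {s\<in>S. g s = t}) \<le> (\<Sum>t\<in>T. card {s\<in>S. g s = t})" by (rule card_UN_le[OF assms(3)])
  hence "card S \<le> (\<Sum>t\<in>T. card {s\<in>S. g s = t})" unfolding eq[symmetric] .
  also have "\<dots> \<le> (\<Sum>t\<in>T. N)" by (rule sum_mono) (use assms(4) in auto)
  finally show ?thesis by simp
qed

lemma prod_if_pow:
  fixes c0 c1 w :: nat
  assumes "finite A" "F \<subseteq> A" "c1 * w = c0"
  shows "(\<Prod>j\<in>A. if j\<in>F then c1 else c0) * w^(card F) = c0^(card A)"
proof -
  have fF: "finite F" using assms finite_subset by blast
  have "(\<Prod>j\<in>A. if j\<in>F then c1 else c0) = (\<Prod>j\<in>A-F. if j\<in>F then c1 else c0) * (\<Prod>j\<in>F. if j\<in>F then c1 else c0)"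
    using prod.subset_diff[OF assms(2,1)] by blast
  also have "\<dots> = c0^(card (A - F)) * c1^(card F)" by simp
  finally have "(\<Prod>j\<in>A. if j\<in>F then c1 else c0) * w^(card F) = c0^(card (A - F)) * (c1 * w)^(card F)"
    by (simp add: power_mult_distrib)
  also have "\<dots> = c0^(card A)" using assms card_mono[OF assms(1,2)]
    by (simp add: card_Diff_subset fF power_add[symmetric])
  finally show ?thesis .
qed

lemma pick_range:
  assumes "i < k" shows "pick {0..<k} i = i"
proof -
  have ck: "i < card {0..<k}" using assms by simp
  have p: "pick {0..<k} i \<in> {0..<k}" using pick_in_set_le[OF ck] .
  have "card {a\<in>{0..<k}. a < pick {0..<k} i} = i" using card_pick_le[OF ck] .
  moreover have "{a\<in>{0..<k}. a < pick {0..<k} i} = {..<pick {0..<k} i}" using p by auto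
  ultimately show ?thesis by simp
qed

lemma pick_bij:
  assumes "finite F" shows "bij_betw (pick F) {..<card F} F"
proof (rule bij_betw_imageI)
  show "inj_on (pick F) {..<card F}"
  proof
    fix a b assume "a \<in> {..<card F}" "b \<in> {..<card F}" "pick F a = pick F b"
    hence "card {x\<in>F. x < pick F a} = card {x\<in>F. x < pick F b}" by simp
    moreover have "card {x\<in>F. x < pick F a} = a" using \<open>a \<in> {..<card F}\<close> by (intro card_pick_le) simp
    moreover have "card {x\<in>F. x < pick F b} = b" using \<open>b \<in> {..<card F}\<close> by (intro card_pick_le) simp
    ultimately show "a = b" by simp
  qed
  show "pick F ` {..<card F} = F"
  proof
    show "pick F ` {..<card F} \<subseteq> F" using pick_in_set_le by auto
    show "F \<subseteq> pick F ` {..<card F}"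
    proof
      fix j assume j: "j \<in> F"
      have "{a\<in>F. a < j} \<subset> F" using j by auto
      hence "card {a\<in>F. a < j} < card F" using assms by (simp add: psubset_card_mono)
      hence "card {a\<in>F. a < j} \<in> {..<card F}" by simp
      thus "j \<in> pick F ` {..<card F}" by (rule image_eqI[where f="pick F", OF pick_card_in_set[OF j, symmetric]])
    qed
  qed
qed

lemma words_upd: "f \<in> words m \<Longrightarrow> i < 2*m \<Longrightarrow> 0 \<le> c \<Longrightarrow> c < 2^32 \<Longrightarrow> f(i := c) \<in> words m"
  unfolding words_def by (auto simp: PiE_iff extensional_def)

lemma finite_words: "finite (words m)"
  unfolding words_def by (intro finite_PiE) auto

lemma card_words: "card (words m) = (2^32)^(2*m)"
  unfolding words_def by (simp add: card_PiE)

lemma card_words_zero: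
  assumes "i < 2*m"
  shows "card {f \<in> words m. f i = 0} * 2^32 = card (words m)"
proof -
  have "{f \<in> words m. f i = 0} = PiE {0..<2*m} (\<lambda>l. if l \<in> {i} then {0} else {0..<(2::int)^32})"
  proof (intro Set.set_eqI iffI)
    fix f assume f: "f \<in> {f \<in> words m. f i = 0}"
    show "f \<in> PiE {0..<2*m} (\<lambda>l. if l \<in> {i} then {0} else {0..<(2::int)^32})"
      unfolding PiE_iff
    proof (intro conjI ballI)
      fix l assume "l \<in> {0..<2*m}"
      thus "f l \<in> (if l \<in> {i} then {0} else {0..<(2::int)^32})" using f unfolding words_def by auto
    qed (use f in \<open>auto simp: words_def PiE_iff\<close>)
  next
    fix f assume f: "f \<in> PiE {0..<2*m} (\<lambda>l. if l \<in> {i} then {0} else {0..<(2::int)^32})"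
    have "f \<in> words m" unfolding words_def PiE_iff
    proof (intro conjI ballI)
      fix l assume l: "l \<in> {0..<2*m}"
      have "f l \<in> (if l \<in> {i} then {0} else {0..<(2::int)^32})" by (rule PiE_mem[OF f l])
      thus "f l \<in> {0..<(2::int)^32}" by (auto split: if_splits)
    qed (use f in \<open>simp add: PiE_iff\<close>)
    moreover have "f i = 0" using PiE_mem[OF f, of i] assms by simp
    ultimately show "f \<in> {f \<in> words m. f i = 0}" by simp
  qed
  hence "card {f \<in> words m. f i = 0} = (\<Prod>l\<in>{0..<2*m}. if l \<in> {i} then 1 else 2^32)"
    by (simp add: card_PiE if_distrib cong: if_cong)
  hence "card {f \<in> words m. f i = 0} * (2^32)^(card {i}) = (2^32)^(card {0..<2*m})"
    using prod_if_pow[of "{0..<2*m}" "{i}" 1 "2^32" "2^32"] assms by simp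
  thus ?thesis by (simp add: card_words)
qed

theorem mainTheorem2:
  fixes D :: "'d set" and m e k p :: nat
    and J :: "'d \<Rightarrow> nat \<Rightarrow> nat \<Rightarrow> int" and T :: "int mat"
    and x y :: 'd and \<delta> :: "nat \<Rightarrow> int"
  assumes "m \<ge> 1" and "k \<ge> 1" and "e \<ge> k"
    and J_range: "\<And>z i. z \<in> D \<Longrightarrow> i < e \<Longrightarrow> J z i \<in> words m"
    and J_dist: "\<And>z w. z \<in> D \<Longrightarrow> w \<in> D \<Longrightarrow> z \<noteq> w \<Longrightarrow>
                   card {i \<in> {0..<e}. J z i \<noteq> J w i} \<ge> k"
    and T_dim: "dim_row T = k" "dim_col T = e"
    and T_det: "\<And>F. F \<subseteq> {0..<e} \<Longrightarrow> card F = k \<Longrightarrow>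
                   \<not> (2::int)^64 dvd det (submatrix T {0..<k} F)"
    and p_def: "p = Max {multiplicity (2::int) (det (submatrix T {0..<k} F)) | F.
                          F \<subseteq> {0..<e} \<and> card F = k}"
    and "x \<in> D" "y \<in> D" "x \<noteq> y"
    and \<delta>_range: "\<And>i. i < k \<Longrightarrow> \<delta> i \<in> {0..<(2::int)^64}"
  shows "real (card {s \<in> keys m e. \<forall>i<k. (EHC m T J s x i - EHC m T J s y i) mod 2^64 = \<delta> i})
           / real (card (keys m e))
         \<le> 2 powr (real k * (real p - 32))"
proof -
  have xD: "x \<in> D" and yD: "y \<in> D" and xy: "x \<noteq> y" using assms by auto
  have "k \<le> card {i \<in> {0..<e}. J x i \<noteq> J y i}" using J_dist[OF xD yD xy] .
  then obtain F where F: "F \<subseteq> {i \<in> {0..<e}. J x i \<noteq> J y i}" "card F = k" "finite F"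
    by (rule obtain_subset_with_card_n)
  have Fe: "F \<subseteq> {0..<e}" and Fe': "F \<subseteq> {..<e}" using F by auto
  have JW: "J x j \<in> words m" "J y j \<in> words m" if "j \<in> F" for j
    using J_range xD yD that Fe by auto
  have "\<forall>j\<in>F. \<exists>i. i < 2*m \<and> J x j i \<noteq> J y j i"
  proof
    fix j assume j: "j \<in> F"
    hence "J x j \<noteq> J y j" using F by auto
    then obtain i where i: "J x j i \<noteq> J y j i" by (auto simp: fun_eq_iff)
    have "i < 2*m"
    proof (rule ccontr)
      assume "\<not> i < 2*m"
      hence "J x j i = undefined" "J y j i = undefined" using JW[OF j] unfolding words_def
        by (auto simp: PiE_iff extensional_def)
      thus False using i by simp
    qed
    thus "\<exists>i. i < 2*m \<and> J x j i \<noteq> J y j i" using i by blast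
  qed
  from bchoice[OF this] obtain z0 where z0': "\<forall>j\<in>F. z0 j < 2*m \<and> J x j (z0 j) \<noteq> J y j (z0 j)" by blast
  have z0: "\<And>j. j \<in> F \<Longrightarrow> z0 j < 2*m \<and> J x j (z0 j) \<noteq> J y j (z0 j)" using z0' by blast
  define z1 where "z1 j = partner (z0 j)" for j
  have z1: "z1 j < 2*m" if "j \<in> F" for j using z0[OF that] partner_lt unfolding z1_def by blast
  define M where "M = submatrix T {0..<k} F"
  have cr: "card {i. i < dim_row T \<and> i \<in> {0..<k}} = k"
  proof -
    have "{i. i < dim_row T \<and> i \<in> {0..<k}} = {0..<k}" using T_dim by auto
    thus ?thesis by simp
  qed
  have cc: "card {j. j < dim_col T \<and> j \<in> F} = k"
  proof -
    have "{j. j < dim_col T \<and> j \<in> F} = F" using T_dim Fe by auto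
    thus ?thesis using F by simp
  qed
  have Mc: "M \<in> carrier_mat k k" unfolding M_def carrier_mat_def using dim_submatrix[of T] cr cc by auto
  have Mi: "M $$ (i,l) = T $$ (i, pick F l)" if "i < k" "l < k" for i l
    unfolding M_def using submatrix_index[of i T "{0..<k}" l F] cr cc that pick_range by simp
  define dt where "dt = det M"
  have dtn: "\<not> (2::int)^64 dvd dt" using T_det[OF Fe F(2)] unfolding M_def dt_def .
  hence dt0: "dt \<noteq> 0" by auto
  define v where "v = multiplicity (2::int) dt"
  obtain oo where oo: "dt = 2^v * oo" "\<not> 2 dvd oo"
    using multiplicity_decompose'[of dt 2] dt0 unfolding v_def by auto
  have v64: "v \<le> 64"
  proof (rule ccontr)
    assume "\<not> v \<le> 64"
    hence "(2::int)^64 dvd 2^v" by (intro le_imp_power_dvd) simp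
    hence "(2::int)^64 dvd dt" unfolding oo(1) by (rule dvd_mult2)
    thus False using dtn by simp
  qed
  have vp: "v \<le> p"
  proof -
    have fin: "finite {F. F \<subseteq> {0..<e} \<and> card F = k}" by simp
    have "{multiplicity (2::int) (det (submatrix T {0..<k} F)) | F. F \<subseteq> {0..<e} \<and> card F = k}
        = (\<lambda>F. multiplicity (2::int) (det (submatrix T {0..<k} F))) ` {F. F \<subseteq> {0..<e} \<and> card F = k}" by auto
    hence "finite {multiplicity (2::int) (det (submatrix T {0..<k} F)) | F. F \<subseteq> {0..<e} \<and> card F = k}"
      using fin by simp
    moreover have "v \<in> {multiplicity (2::int) (det (submatrix T {0..<k} F)) | F. F \<subseteq> {0..<e} \<and> card F = k}"
      unfolding v_def dt_def M_def using Fe F(2) by blast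
    ultimately show ?thesis unfolding p_def by (rule Max_ge)
  qed
  define hh where "hh j \<sigma> = NH m \<sigma> (J x j) - NH m \<sigma> (J y j)" for j \<sigma>
  define adjM where "adjM = adj_mat M"
  define r where "r i s = \<delta> i - (\<Sum>j\<in>{..<e}-F. T $$ (i,j) * hh j (s j))" for i s
  define a where "a l s = (\<Sum>i<k. adjM $$ (l,i) * r i s)" for l s
  define S where "S = {s \<in> keys m e. \<forall>i<k. (EHC m T J s x i - EHC m T J s y i) mod 2^64 = \<delta> i}"
  have pb: "bij_betw (pick F) {..<k} F" using pick_bij[OF F(3)] F(2) by simp
  have C1: "(2::int)^64 dvd dt * hh (pick F l) (s (pick F l)) - a l s" if s: "s \<in> S" and l: "l < k" for s l
  proof -
    define u where "u l' = hh (pick F l') (s (pick F l'))" for l'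
    have row: "(2::int)^64 dvd (\<Sum>l'<k. M $$ (i,l') * u l') - r i s" if i: "i < k" for i
    proof -
      define X where "X = (\<Sum>j<e. T $$ (i,j) * NH m (s j) (J x j))"
      define Y where "Y = (\<Sum>j<e. T $$ (i,j) * NH m (s j) (J y j))"
      have "(EHC m T J s x i - EHC m T J s y i) mod 2^64 = \<delta> i" using s i unfolding S_def by blast
      hence "(X mod 2^64 - Y mod 2^64) mod 2^64 = \<delta> i" unfolding EHC_def X_def Y_def T_dim(2) .
      hence "(X - Y) mod 2^64 = \<delta> i" unfolding mod_diff_eq .
      hence d1: "(2::int)^64 dvd (X - Y) - \<delta> i" using dvd_mod_self[of "2^64" "X - Y"]
        by (metis dvd_minus_iff minus_diff_eq)
      have "X - Y = (\<Sum>j<e. T $$ (i,j) * hh j (s j))" unfolding X_def Y_def hh_def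
        by (simp add: sum_subtractf right_diff_distrib)
      also have "\<dots> = (\<Sum>j\<in>{..<e}-F. T $$ (i,j) * hh j (s j)) + (\<Sum>j\<in>F. T $$ (i,j) * hh j (s j))"
        using sum.subset_diff[OF Fe'] by simp
      also have "(\<Sum>j\<in>F. T $$ (i,j) * hh j (s j)) = (\<Sum>l'<k. T $$ (i, pick F l') * hh (pick F l') (s (pick F l')))"
        using sum.reindex_bij_betw[OF pb, of "\<lambda>j. T $$ (i,j) * hh j (s j)"] by simp
      also have "\<dots> = (\<Sum>l'<k. M $$ (i,l') * u l')" unfolding u_def using Mi i by simp
      finally have eqr: "X - Y - \<delta> i = (\<Sum>l'<k. M $$ (i,l') * u l') - r i s" unfolding r_def by simp
      show ?thesis using d1 unfolding eqr .
    qed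
    have dvA: "(2::int)^64 dvd (\<Sum>i<k. adjM $$ (l,i) * ((\<Sum>l'<k. M $$ (i,l') * u l') - r i s))"
      by (intro dvd_sum dvd_mult row) auto
    have eqA: "(\<Sum>i<k. adjM $$ (l,i) * ((\<Sum>l'<k. M $$ (i,l') * u l') - r i s)) = dt * u l - a l s"
    proof -
      have adjid: "(\<Sum>i<k. adjM $$ (l,i) * M $$ (i,l')) = (if l = l' then dt else 0)" if "l' < k" for l'
      proof -
        have "adjM * M = dt \<cdot>\<^sub>m 1\<^sub>m k" using adj_mat(3)[OF Mc] unfolding adjM_def dt_def .
        hence "(adjM * M) $$ (l,l') = (if l = l' then dt else 0)" using l that by simp
        moreover have "(adjM * M) $$ (l,l') = (\<Sum>i<k. adjM $$ (l,i) * M $$ (i,l'))"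
          using adj_mat(1)[OF Mc] Mc l that unfolding adjM_def
          by (simp add: scalar_prod_def atLeast0LessThan)
        ultimately show ?thesis by simp
      qed
      have "(\<Sum>i<k. adjM $$ (l,i) * ((\<Sum>l'<k. M $$ (i,l') * u l') - r i s))
          = (\<Sum>i<k. \<Sum>l'<k. adjM $$ (l,i) * M $$ (i,l') * u l') - a l s"
        unfolding a_def by (simp add: right_diff_distrib sum_subtractf sum_distrib_left mult.assoc)
      also have "(\<Sum>i<k. \<Sum>l'<k. adjM $$ (l,i) * M $$ (i,l') * u l') = (\<Sum>l'<k. (\<Sum>i<k. adjM $$ (l,i) * M $$ (i,l')) * u l')"
        by (subst sum.swap) (simp add: sum_distrib_right)
      also have "\<dots> = (\<Sum>l'<k. (if l = l' then dt else 0) * u l')" using adjid by simp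
      also have "\<dots> = (\<Sum>l'<k. if l = l' then dt * u l' else 0)" by (rule sum.cong) auto
      also have "\<dots> = dt * u l" using l by (simp add: sum.delta)
      finally show ?thesis .
    qed
    show ?thesis using dvA unfolding eqA unfolding u_def .
  qed
  define g where "g s = (\<lambda>j. if j \<in> F then (s j)(z1 j := 0) else s j)" for s :: "nat \<Rightarrow> nat \<Rightarrow> int"
  define Tset where "Tset = PiE {0..<e} (\<lambda>j. if j \<in> F then {f \<in> words m. f (z1 j) = 0} else words m)"
  have finK: "finite (keys m e)" unfolding keys_def using finite_words by (intro finite_PiE) auto
  have finS: "finite S" unfolding S_def using finK by simp
  have finT: "finite Tset" unfolding Tset_def using finite_words by (intro finite_PiE) auto
  have gS: "g ` S \<subseteq> Tset"
  proof
    fix t assume "t \<in> g ` S"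
    then obtain s where s: "s \<in> S" "t = g s" by auto
    have sk: "s \<in> keys m e" using s S_def by auto
    show "t \<in> Tset" unfolding Tset_def PiE_iff
    proof (intro conjI ballI)
      fix j assume j: "j \<in> {0..<e}"
      have "s j \<in> words m" using sk j unfolding keys_def by auto
      thus "t j \<in> (if j \<in> F then {f \<in> words m. f (z1 j) = 0} else words m)"
        using s(2) z1 words_upd unfolding g_def by auto
    next
      show "t \<in> extensional {0..<e}" using sk Fe s(2) unfolding keys_def g_def by (auto simp: PiE_iff extensional_def)
    qed
  qed
  have fib: "card {s\<in>S. g s = t} \<le> (2^v)^k" if t: "t \<in> Tset" for t
  proof -
    define Fb where "Fb = {s\<in>S. g s = t}"
    define \<phi> where "\<phi> s = restrict (\<lambda>l. s (pick F l) (z1 (pick F l))) {..<k}" for s :: "nat \<Rightarrow> nat \<Rightarrow> int"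
    define Ys where "Ys l = {y \<in> {0..<(2::int)^32}. (2::int)^64 dvd dt * hh (pick F l) ((t (pick F l))(z1 (pick F l) := y)) - a l t}" for l
    have fibF: "s j = (t j)(z1 j := s j (z1 j))" if "s \<in> Fb" "j \<in> F" for s j
      using that unfolding Fb_def g_def by auto
    have fibG: "s j = t j" if "s \<in> Fb" "j \<notin> F" for s j
      using that unfolding Fb_def g_def by auto
    have aeq: "a l s = a l t" if "s \<in> Fb" for s l
      unfolding a_def r_def using fibG[OF that] by simp
    have "inj_on \<phi> Fb"
    proof
      fix s s' assume ss: "s \<in> Fb" "s' \<in> Fb" "\<phi> s = \<phi> s'"
      show "s = s'"
      proof
        fix j show "s j = s' j"
        proof (cases "j \<in> F")
          case True
          then obtain l where l: "l < k" "j = pick F l" using pb unfolding bij_betw_def by auto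
          have "s j (z1 j) = s' j (z1 j)" using fun_cong[OF ss(3), of l] l unfolding \<phi>_def by simp
          have "s j = (t j)(z1 j := s j (z1 j))" by (rule fibF[OF ss(1) True])
          also have "\<dots> = (t j)(z1 j := s' j (z1 j))" using \<open>s j (z1 j) = s' j (z1 j)\<close> by simp
          also have "\<dots> = s' j" by (rule fibF[OF ss(2) True, symmetric])
          finally show ?thesis .
        next
          case False
          thus ?thesis using fibG[OF ss(1) False] fibG[OF ss(2) False] by simp
        qed
      qed
    qed
    moreover have "\<phi> ` Fb \<subseteq> PiE {..<k} Ys"
    proof
      fix z assume "z \<in> \<phi> ` Fb"
      then obtain s where s: "s \<in> Fb" "z = \<phi> s" by auto
      have sS: "s \<in> S" using s Fb_def by auto
      show "z \<in> PiE {..<k} Ys" unfolding PiE_iff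
      proof (intro conjI ballI)
        fix l assume l: "l \<in> {..<k}"
        define j where "j = pick F l"
        have j: "j \<in> F" using pb l unfolding bij_betw_def j_def by auto
        have sK: "s \<in> keys m e" using sS unfolding S_def by blast
        have jE: "j \<in> {0..<e}" using Fe j by blast
        have "s j \<in> words m" using PiE_mem[OF sK[unfolded keys_def] jE] .
        hence yr: "0 \<le> s j (z1 j)" "s j (z1 j) < 2^32" using words_range z1[OF j] by auto
        have lk: "l < k" using l by simp
        have c1: "(2::int)^64 dvd dt * hh j (s j) - a l s" using C1[OF sS lk] unfolding j_def .
        have e1: "dt * hh j (s j) - a l s = dt * hh j ((t j)(z1 j := s j (z1 j))) - a l t"
          using arg_cong[where f="\<lambda>z. dt * hh j z", OF fibF[OF s(1) j]] aeq[OF s(1), of l] by simp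
        have "(2::int)^64 dvd dt * hh j ((t j)(z1 j := s j (z1 j))) - a l t"
          using c1 unfolding e1 .
        moreover have "s j (z1 j) \<in> {0..<(2::int)^32}" using yr by simp
        ultimately have "s j (z1 j) \<in> Ys l" unfolding Ys_def j_def[symmetric] by blast
        moreover have "z l = s j (z1 j)" using s(2) l unfolding \<phi>_def j_def by simp
        ultimately show "z l \<in> Ys l" by simp
      next
        show "z \<in> extensional {..<k}" using s(2) unfolding \<phi>_def by simp
      qed
    qed
    moreover have finP: "finite (PiE {..<k} Ys)"
    proof (intro finite_PiE)
      fix l
      have "Ys l \<subseteq> {0..<(2::int)^32}" unfolding Ys_def by blast
      thus "finite (Ys l)" using finite_subset by blast
    qed simp
    ultimately have "card Fb \<le> card (PiE {..<k} Ys)" by (rule card_inj_on_le)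
    also have "\<dots> = (\<Prod>l<k. card (Ys l))" by (simp add: card_PiE)
    also have "\<dots> \<le> (\<Prod>l<k. 2^v)"
    proof (rule prod_mono)
      fix l assume l: "l \<in> {..<k}"
      define j where "j = pick F l"
      have j: "j \<in> F" using pb l unfolding bij_betw_def j_def by auto
      have "card (Ys l) \<le> 2^v" unfolding Ys_def
      proof (rule count_Y[where oo=oo])
        fix yv yv' assume yy: "yv \<in> {0..<(2::int)^32}" "yv' \<in> {0..<(2::int)^32}"
          "(2::int)^64 dvd hh (pick F l) ((t (pick F l))(z1 (pick F l) := yv)) - hh (pick F l) ((t (pick F l))(z1 (pick F l) := yv'))"
        have yr: "0 \<le> yv" "yv < 2^32" "0 \<le> yv'" "yv' < 2^32" using yy(1,2) by auto
        have dv: "(2::int)^64 dvd (NH m ((t j)(partner (z0 j) := yv)) (J x j) - NH m ((t j)(partner (z0 j) := yv)) (J y j))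
                  - (NH m ((t j)(partner (z0 j) := yv')) (J x j) - NH m ((t j)(partner (z0 j) := yv')) (J y j))"
          using yy(3) unfolding hh_def z1_def j_def[symmetric] .
        show "yv = yv'"
          by (rule NH_inj[OF JW(1)[OF j] JW(2)[OF j] conjunct1[OF z0[OF j]] conjunct2[OF z0[OF j]] yr dv])
      qed (use oo v64 in auto)
      thus "0 \<le> card (Ys l) \<and> card (Ys l) \<le> 2^v" by simp
    qed
    also have "\<dots> = (2^v)^k" by simp
    finally show ?thesis unfolding Fb_def .
  qed
  have cS: "card S \<le> card Tset * (2^v)^k" by (rule fiber_card[OF finS gS finT fib])
  define c0 where "c0 = card (words m)"
  define c1 where "c1 = card {f \<in> words m. f 0 = 0}"
  have c10: "c1 * 2^32 = c0" unfolding c0_def c1_def using card_words_zero[of 0 m] assms(1) by simp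
  have cT: "card Tset = (\<Prod>j\<in>{0..<e}. if j \<in> F then c1 else c0)"
  proof -
    have "card Tset = (\<Prod>j\<in>{0..<e}. card (if j \<in> F then {f \<in> words m. f (z1 j) = 0} else words m))"
      unfolding Tset_def by (simp add: card_PiE)
    also have "\<dots> = (\<Prod>j\<in>{0..<e}. if j \<in> F then c1 else c0)"
    proof (rule prod.cong)
      fix j assume "j \<in> {0..<e}"
      show "card (if j \<in> F then {f \<in> words m. f (z1 j) = 0} else words m) = (if j \<in> F then c1 else c0)"
      proof (cases "j \<in> F")
        case True
        have "card {f \<in> words m. f (z1 j) = 0} * 2^32 = c1 * 2^32"
          using card_words_zero[OF z1[OF True]] c10 c0_def by simp
        thus ?thesis using True by simp
      qed (simp add: c0_def)
    qed simp
    finally show ?thesis .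
  qed
  have cK: "card (keys m e) = c0^e" unfolding keys_def c0_def by (simp add: card_PiE)
  have TK: "card Tset * (2^32)^k = card (keys m e)"
    using prod_if_pow[OF _ Fe c10] cT cK F(2) by simp
  have K0: "card (keys m e) > 0" unfolding cK c0_def card_words by simp
  have c1': "card S \<le> card Tset * 2^(v*k)" using cS by (simp add: power_mult)
  have r1: "real (card S) \<le> real (card Tset) * 2^(v*k)"
    using of_nat_mono[OF c1'] by simp
  have TK': "card Tset * 2^(32*k) = card (keys m e)" using TK by (simp add: power_mult)
  have TKr: "real (card Tset) * 2^(32*k) = real (card (keys m e))"
    using arg_cong[OF TK', of real] by simp
  have "real (card S) * 2^(32*k) \<le> real (card Tset) * 2^(v*k) * 2^(32*k)"
    using r1 by (intro mult_right_mono) auto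
  also have "\<dots> = (real (card Tset) * 2^(32*k)) * 2^(v*k)" by (simp only: ac_simps)
  also have "\<dots> = real (card (keys m e)) * 2^(v*k)" unfolding TKr ..
  finally have "real (card S) * 2^(32*k) \<le> real (card (keys m e)) * 2^(v*k)" .
  hence "real (card S) / real (card (keys m e)) \<le> 2^(v*k) / 2^(32*k)"
    using K0 by (simp add: divide_le_eq le_divide_eq mult.commute)
  also have "\<dots> = 2 powr (real k * (real v - 32))"
  proof -
    have a1: "(2::real)^(v*k) = 2 powr (real (v*k))" by (rule powr_realpow[symmetric]) simp
    have a2: "(2::real)^(32*k) = 2 powr (real (32*k))" by (rule powr_realpow[symmetric]) simp
    have a3: "real (v*k) - real (32*k) = real k * (real v - 32)" by (simp add: algebra_simps)
    show ?thesis unfolding a1 a2 powr_diff[symmetric] a3 ..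
  qed
  also have "\<dots> \<le> 2 powr (real k * (real p - 32))"
    using vp by (intro powr_mono mult_left_mono) auto
  finally show ?thesis unfolding S_def .
qed

end
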